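(* For every finite directed acyclic graph $G=(N,E)$, the Geometric Mechanism satisfies $\frac{\sum_{i\in N}x_i(G)\,p_i}{p^*}\ge \frac12$, where $p^*=\max_{i\in N}p_i$. That is, the Geometric Mechanism has approximation ratio $1/2$ on the family of DAGs.
   Context: In a DAG $G=(N,E)$ with $N=\{1,\dots,n\}$, $P_i$ is the set of nodes having a directed path to $i$ (with $i\in P_i$), and $p_i=|P_i|$. Write $p_i\succ p_j$ if $p_i>p_j$, or $p_i=p_j$ and $i<j$. For a node $i$, let $G^{(i)}$ be the graph obtained from $G$ by deleting all out-edges of $i$. Node $i$ is influential if, with progeny measured in $G^{(i)}$, $p_i\succ p_j$ for all $j\ne i$. The influential set $\{s_1,\dots,s_m\}$ is the set of influential nodes, indexed so that $p_{s_1}\succ\cdots\succ p_{s_m}$, with progeny measured in $G$. The Geometric Mechanism selects $s_j$ with probability $x_{s_j}(G)=1/2^{m-j+1}$ for $j=1,\dots,m$, and selects every other node with probability $0$. *)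

theory Defs
  imports Complex_Main
begin

definition is_dag :: "nat \<Rightarrow> (nat \<times> nat) set \<Rightarrow> bool" where
  "is_dag n E \<longleftrightarrow> E \<subseteq> {1..n} \<times> {1..n} \<and> acyclic E"

definition progeny_set :: "nat \<Rightarrow> (nat \<times> nat) set \<Rightarrow> nat \<Rightarrow> nat set" where
  "progeny_set n E i = {j \<in> {1..n}. (j, i) \<in> E\<^sup>*}"

definition progeny :: "nat \<Rightarrow> (nat \<times> nat) set \<Rightarrow> nat \<Rightarrow> nat" where
  "progeny n E i = card (progeny_set n E i)"

definition prec_succ :: "nat \<Rightarrow> (nat \<times> nat) set \<Rightarrow> nat \<Rightarrow> nat \<Rightarrow> bool" where
  "prec_succ n E i j \<longleftrightarrow>
     progeny n E i > progeny n E j \<or> (progeny n E i = progeny n E j \<and> i < j)"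

definition del_out :: "(nat \<times> nat) set \<Rightarrow> nat \<Rightarrow> (nat \<times> nat) set" where
  "del_out E i = {(a, b) \<in> E. a \<noteq> i}"

definition influential :: "nat \<Rightarrow> (nat \<times> nat) set \<Rightarrow> nat \<Rightarrow> bool" where
  "influential n E i \<longleftrightarrow> i \<in> {1..n} \<and>
     (\<forall>j \<in> {1..n}. j \<noteq> i \<longrightarrow> prec_succ n (del_out E i) i j)"

definition influential_set :: "nat \<Rightarrow> (nat \<times> nat) set \<Rightarrow> nat set" where
  "influential_set n E = {i \<in> {1..n}. influential n E i}"

text \<open>Index j of an influential node s_j in the ordering p_{s_1} \<succ> ... \<succ> p_{s_m}
  (progeny measured in G): j = 1 + number of influential nodes ranked above it.\<close>
definition infl_index :: "nat \<Rightarrow> (nat \<times> nat) set \<Rightarrow> nat \<Rightarrow> nat" where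
  "infl_index n E i = card {k \<in> influential_set n E. prec_succ n E k i} + 1"

definition geom_mech :: "nat \<Rightarrow> (nat \<times> nat) set \<Rightarrow> nat \<Rightarrow> real" where
  "geom_mech n E i =
     (if i \<in> influential_set n E
      then 1 / 2 ^ (card (influential_set n E) - infl_index n E i + 1)
      else 0)"

end

theory Submission
  imports Defs
begin

lemma rt_mono_del: "(j,i) \<in> (del_out E a)\<^sup>* \<Longrightarrow> (j,i) \<in> E\<^sup>*"
proof -
  have "del_out E a \<subseteq> E" unfolding del_out_def by auto
  then have "(del_out E a)\<^sup>* \<subseteq> E\<^sup>*" by (rule rtrancl_mono)
  then show "(j,i) \<in> (del_out E a)\<^sup>* \<Longrightarrow> (j,i) \<in> E\<^sup>*" by blast
qed

lemma rt_to_self: "(j,i) \<in> E\<^sup>* \<Longrightarrow> (j,i) \<in> (del_out E i)\<^sup>*"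
proof (induction rule: converse_rtrancl_induct)
  case base then show ?case by simp
next
  case (step y z)
  show ?case
  proof (cases "y = i")
    case True then show ?thesis by simp
  next
    case False
    then have "(y,z) \<in> del_out E i" using step by (simp add: del_out_def)
    then show ?thesis using step by (meson converse_rtrancl_into_rtrancl)
  qed
qed

lemma rt_avoid: "(j,t) \<in> E\<^sup>* \<Longrightarrow> (j,i) \<notin> E\<^sup>* \<Longrightarrow> (j,t) \<in> (del_out E i)\<^sup>*"
proof (induction rule: converse_rtrancl_induct)
  case base then show ?case by simp
next
  case (step y z)
  have "(z,i) \<notin> E\<^sup>*" using step by (meson converse_rtrancl_into_rtrancl)
  then have IH: "(z,t) \<in> (del_out E i)\<^sup>*" using step by blast
  have "y \<noteq> i" using step by auto
  then have "(y,z) \<in> del_out E i" using step by (simp add: del_out_def)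
  then show ?case using IH by (meson converse_rtrancl_into_rtrancl)
qed

lemma prog_self: "progeny n (del_out E i) i = progeny n E i"
proof -
  have "progeny_set n (del_out E i) i = progeny_set n E i"
    unfolding progeny_set_def
  proof (intro Collect_cong conj_cong refl iffI)
    fix j assume "(j, i) \<in> (del_out E i)\<^sup>*" then show "(j, i) \<in> E\<^sup>*" by (rule rt_mono_del)
  next
    fix j assume "(j, i) \<in> E\<^sup>*" then show "(j, i) \<in> (del_out E i)\<^sup>*" by (rule rt_to_self)
  qed
  then show ?thesis by (simp add: progeny_def)
qed

lemma prog_mono: "progeny n (del_out E i) j \<le> progeny n E j"
proof -
  have "progeny_set n (del_out E i) j \<subseteq> progeny_set n E j"
    unfolding progeny_set_def using rt_mono_del[of _ j E i] by auto
  then show ?thesis unfolding progeny_def by (intro card_mono) (auto simp: progeny_set_def)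
qed

lemma prog_lower: "progeny n E t \<le> progeny n (del_out E i) t + progeny n E i"
proof -
  have "progeny_set n E t \<subseteq> progeny_set n (del_out E i) t \<union> progeny_set n E i"
    unfolding progeny_set_def using rt_avoid[of _ t E i] by auto
  then have "progeny n E t \<le> card (progeny_set n (del_out E i) t \<union> progeny_set n E i)"
    unfolding progeny_def by (intro card_mono) (auto simp: progeny_set_def)
  also have "\<dots> \<le> progeny n (del_out E i) t + progeny n E i"
    unfolding progeny_def by (rule card_Un_le)
  finally show ?thesis .
qed

lemma prog_pos: "i \<in> {1..n} \<Longrightarrow> progeny n E i \<ge> 1"
proof -
  assume "i \<in> {1..n}"
  then have "i \<in> progeny_set n E i" by (simp add: progeny_set_def)
  moreover have "finite (progeny_set n E i)" by (simp add: progeny_set_def)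
  ultimately have "card (progeny_set n E i) > 0" using card_gt_0_iff by blast
  then show ?thesis unfolding progeny_def by simp
qed

lemma geom_sum: "(\<Sum>j\<in>{1..m}. (1::real) / 2 ^ (m - j + 1)) = 1 - 1 / 2 ^ m"
proof (induction m)
  case 0 then show ?case by simp
next
  case (Suc m)
  have "(\<Sum>j\<in>{1..Suc m}. (1::real) / 2 ^ (Suc m - j + 1))
      = (\<Sum>j\<in>{1..m}. (1::real) / 2 ^ (Suc m - j + 1)) + 1/2"
    by simp
  also have "(\<Sum>j\<in>{1..m}. (1::real) / 2 ^ (Suc m - j + 1))
      = (\<Sum>j\<in>{1..m}. (1/2) * ((1::real) / 2 ^ (m - j + 1)))"
    by (intro sum.cong) (auto simp: Suc_diff_le)
  also have "\<dots> = (1/2) * (\<Sum>j\<in>{1..m}. (1::real) / 2 ^ (m - j + 1))"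
    by (simp only: sum_distrib_left)
  also have "\<dots> = (1/2) * (1 - 1/2^m)" using Suc by (simp only:)
  finally show ?case by (simp add: field_simps)
qed


lemma ps_trans: "prec_succ n E a b \<Longrightarrow> prec_succ n E b c \<Longrightarrow> prec_succ n E a c"
  unfolding prec_succ_def by auto

lemma ps_irrefl: "\<not> prec_succ n E a a"
  unfolding prec_succ_def by auto

lemma ps_total: "a \<noteq> b \<Longrightarrow> prec_succ n E a b \<or> prec_succ n E b a"
  unfolding prec_succ_def by auto

lemma idx_less:
  assumes "i \<in> influential_set n E" "k \<in> influential_set n E" "prec_succ n E i k"
  shows "infl_index n E i < infl_index n E k"
proof -
  let ?S = "influential_set n E"
  have fin: "finite ?S" unfolding influential_set_def by simp
  have "{l \<in> ?S. prec_succ n E l i} \<subset> {l \<in> ?S. prec_succ n E l k}"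
    using assms ps_trans ps_irrefl by blast
  then have "card {l \<in> ?S. prec_succ n E l i} < card {l \<in> ?S. prec_succ n E l k}"
    using fin by (intro psubset_card_mono) auto
  then show ?thesis unfolding infl_index_def by simp
qed

lemma idx_inj: "inj_on (infl_index n E) (influential_set n E)"
proof (rule inj_onI)
  fix i k assume a: "i \<in> influential_set n E" "k \<in> influential_set n E"
    "infl_index n E i = infl_index n E k"
  show "i = k"
  proof (rule ccontr)
    assume "i \<noteq> k"
    then have "prec_succ n E i k \<or> prec_succ n E k i" by (rule ps_total)
    then show False using idx_less[of i n E k] idx_less[of k n E i] a by auto
  qed
qed

lemma idx_range:
  assumes "i \<in> influential_set n E"
  shows "infl_index n E i \<in> {1..card (influential_set n E)}"
proof -
  let ?S = "influential_set n E"
  have fin: "finite ?S" unfolding influential_set_def by simp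
  have "{l \<in> ?S. prec_succ n E l i} \<subseteq> ?S - {i}" using ps_irrefl by blast
  then have "card {l \<in> ?S. prec_succ n E l i} \<le> card (?S - {i})"
    using fin by (intro card_mono) auto
  also have "\<dots> = card ?S - 1" using assms fin by simp
  finally have "card {l \<in> ?S. prec_succ n E l i} \<le> card ?S - 1" .
  moreover have "card ?S \<ge> 1" using assms fin
    by (metis One_nat_def Suc_leI card_gt_0_iff empty_iff)
  ultimately show ?thesis unfolding infl_index_def by auto
qed

lemma idx_image: "infl_index n E ` influential_set n E = {1..card (influential_set n E)}"
proof -
  let ?S = "influential_set n E"
  have fin: "finite ?S" unfolding influential_set_def by simp
  have sub: "infl_index n E ` ?S \<subseteq> {1..card ?S}" using idx_range by blast
  have "card (infl_index n E ` ?S) = card ?S" using idx_inj card_image by blast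
  then show ?thesis using sub by (intro card_subset_eq) auto
qed

lemma geom_total:
  "(\<Sum>i\<in>influential_set n E. geom_mech n E i) = 1 - 1 / 2 ^ card (influential_set n E)"
proof -
  let ?S = "influential_set n E" and ?m = "card (influential_set n E)"
  have "(\<Sum>i\<in>?S. geom_mech n E i) = (\<Sum>i\<in>?S. (\<lambda>j. (1::real) / 2 ^ (?m - j + 1)) (infl_index n E i))"
    by (intro sum.cong) (auto simp: geom_mech_def)
  also have "\<dots> = (\<Sum>j\<in>infl_index n E ` ?S. (1::real) / 2 ^ (?m - j + 1))"
    using sum.reindex[OF idx_inj, symmetric] by (simp add: comp_def)
  also have "\<dots> = 1 - 1 / 2 ^ ?m" unfolding idx_image by (rule geom_sum)
  finally show ?thesis .
qed

theorem theorem2: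
  fixes n :: nat and E :: "(nat \<times> nat) set"
  assumes "n \<ge> 1" and "is_dag n E"
  shows "(\<Sum>i\<in>{1..n}. geom_mech n E i * real (progeny n E i))
           / real (Max ((\<lambda>i. progeny n E i) ` {1..n})) \<ge> 1 / 2"
proof -
  define p where "p = progeny n E"
  define S where "S = influential_set n E"
  define m where "m = card S"
  define M where "M = Max (p ` {1..n})"
  define g where "g = geom_mech n E"
  define T where "T = {i\<in>{1..n}. p i = M}"
  define t where "t = Min T"
  have finS: "finite S" unfolding S_def influential_set_def by simp
  have SN: "S \<subseteq> {1..n}" unfolding S_def influential_set_def by auto
  have Mge: "\<And>j. j \<in> {1..n} \<Longrightarrow> p j \<le> M" unfolding M_def by simp
  have "M \<in> p ` {1..n}" unfolding M_def using assms(1) by (intro Max_in) auto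
  then have Tne: "T \<noteq> {}" unfolding T_def by auto
  have finT: "finite T" unfolding T_def by simp
  have tT: "t \<in> T" unfolding t_def by (rule Min_in[OF finT Tne])
  then have tN: "t \<in> {1..n}" and pt: "p t = M" unfolding T_def by auto
  have tmin: "\<And>j. j \<in> {1..n} \<Longrightarrow> p j = M \<Longrightarrow> t \<le> j"
    unfolding t_def using finT T_def by auto
  have Mpos: "M \<ge> 1" using prog_pos[OF tN, of E] pt p_def by simp
  have top: "\<And>j. j \<in> {1..n} \<Longrightarrow> j \<noteq> t \<Longrightarrow> prec_succ n E t j"
    unfolding prec_succ_def p_def[symmetric] using Mge tmin pt
    by (metis le_neq_implies_less nat_less_le)
  have tinf: "influential n E t"
    unfolding influential_def
  proof (intro conjI ballI impI)
    show "t \<in> {1..n}" by (rule tN)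
  next
    fix j assume j: "j \<in> {1..n}" "j \<noteq> t"
    have a: "progeny n (del_out E t) t = M" using prog_self pt p_def by simp
    have b: "progeny n (del_out E t) j \<le> p j" using prog_mono p_def by simp
    have "p j < M \<or> (p j = M \<and> t < j)" using top[OF j] pt unfolding prec_succ_def p_def by auto
    then show "prec_succ n (del_out E t) t j" unfolding prec_succ_def using a b by auto
  qed
  then have tS: "t \<in> S" unfolding S_def influential_set_def using tN by simp
  have "{k \<in> S. prec_succ n E k t} = {}"
  proof -
    { fix k assume k: "k \<in> S" "prec_succ n E k t"
      then have "k \<in> {1..n}" using SN by auto
      then have "p k \<le> M" "p k = M \<longrightarrow> t \<le> k" using Mge tmin by auto
      then have False using k(2) pt unfolding prec_succ_def p_def by auto }
    then show ?thesis by blast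
  qed
  then have idxt: "infl_index n E t = 1" unfolding infl_index_def S_def by (metis card.empty add_0)
  have m1: "m \<ge> 1" unfolding m_def using tS finS
    by (metis One_nat_def Suc_leI card_gt_0_iff empty_iff)
  have gt: "g t = 1 / 2 ^ m" unfolding g_def geom_mech_def using tS idxt m1
    by (simp add: S_def m_def)
  have half: "\<And>i. i \<in> S \<Longrightarrow> i \<noteq> t \<Longrightarrow> real M \<le> 2 * real (p i)"
  proof -
    fix i assume i: "i \<in> S" "i \<noteq> t"
    then have "influential n E i" unfolding S_def influential_set_def by simp
    then have "prec_succ n (del_out E i) i t" unfolding influential_def using tN i(2) by auto
    then have "progeny n (del_out E i) t \<le> progeny n (del_out E i) i"
      unfolding prec_succ_def by auto
    then have "progeny n (del_out E i) t \<le> p i" using prog_self p_def by simp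
    moreover have "M \<le> progeny n (del_out E i) t + p i" using prog_lower pt p_def by metis
    ultimately show "real M \<le> 2 * real (p i)" by linarith
  qed
  have gnn: "\<And>i. g i \<ge> 0" unfolding g_def geom_mech_def by simp
  have gtot: "(\<Sum>i\<in>S. g i) = 1 - 1 / 2 ^ m" unfolding g_def S_def m_def by (rule geom_total)
  have "(\<Sum>i\<in>{1..n}. g i * real (p i)) = (\<Sum>i\<in>S. g i * real (p i))"
    using SN by (intro sum.mono_neutral_right) (auto simp: g_def geom_mech_def S_def)
  also have "\<dots> = g t * real (p t) + (\<Sum>i\<in>S-{t}. g i * real (p i))"
    using finS tS by (simp add: sum.remove)
  also have "\<dots> \<ge> g t * real M + (\<Sum>i\<in>S-{t}. g i * (real M / 2))"
  proof -
    have "(\<Sum>i\<in>S-{t}. g i * (real M / 2)) \<le> (\<Sum>i\<in>S-{t}. g i * real (p i))"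
    proof (rule sum_mono)
      fix i assume "i \<in> S - {t}"
      then have "real M / 2 \<le> real (p i)" using half by force
      then show "g i * (real M / 2) \<le> g i * real (p i)" using gnn[of i] by (rule mult_left_mono)
    qed
    then show ?thesis using pt by simp
  qed
  finally have A0: "(\<Sum>i\<in>{1..n}. g i * real (p i)) \<ge> g t * real M + (\<Sum>i\<in>S-{t}. g i * (real M / 2))" .
  have "(\<Sum>i\<in>S-{t}. g i * (real M / 2)) = (\<Sum>i\<in>S-{t}. g i) * (real M / 2)"
    by (rule sum_distrib_right[symmetric])
  with A0 have A: "(\<Sum>i\<in>{1..n}. g i * real (p i)) \<ge> g t * real M + (\<Sum>i\<in>S-{t}. g i) * (real M / 2)"
    by simp
  have "(\<Sum>i\<in>S-{t}. g i) = (1 - 1 / 2 ^ m) - 1 / 2 ^ m"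
    using gtot finS tS gt by (simp add: sum.remove)
  then have "(\<Sum>i\<in>S-{t}. g i) = 1 - 2 * g t" using gt by simp
  then have "g t * real M + (\<Sum>i\<in>S-{t}. g i) * (real M / 2) = real M / 2"
    by (simp add: algebra_simps) (metis distrib_left mult.commute mult_1)
  with A have B: "(\<Sum>i\<in>{1..n}. g i * real (p i)) \<ge> real M / 2" by simp
  have Mr: "real M > 0" using Mpos by simp
  from B Mr have "(\<Sum>i\<in>{1..n}. g i * real (p i)) / real M \<ge> 1 / 2"
    by (simp add: field_simps)
  then show ?thesis unfolding g_def p_def M_def .
qed

end
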